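(* Let $X$ be a space, $A\subset X$ and $x\in \operatorname{int}A$, and suppose the boundary $\partial A$ is a C-set in $X$. Then there is a clopen set $C\subset X$ with $x\in C$ and $C\cap\partial A=\varnothing$, and $C\cap\operatorname{int}A=C\cap\overline A$ is clopen in $X$. Consequently a space is rim-C (has a basis of open sets whose boundaries are C-sets) if and only if it is zero-dimensional.
   Context: All spaces are separable and metrizable. A subset $A$ of a space $X$ is a C-set in $X$ if $A$ is an intersection of clopen subsets of $X$ (the empty set counts as a C-set). *)

theory Defs
  imports "HOL-Analysis.Analysis"
begin

text \<open>A C-set in X: an intersection of clopen subsets of X (empty intersection read
  relative to the carrier, so the whole space is a C-set; the empty set is one as well).\<close>
definition c_set :: "'a topology \<Rightarrow> 'a set \<Rightarrow> bool" where
  "c_set X A \<longleftrightarrow> (\<exists>F. (\<forall>C\<in>F. closedin X C \<and> openin X C) \<and> A = topspace X \<inter> \<Inter>F)"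

definition rim_C :: "'a topology \<Rightarrow> bool" where
  "rim_C X \<longleftrightarrow> (\<exists>B. (\<forall>U\<in>B. openin X U \<and> c_set X (X frontier_of U)) \<and>
                    (\<forall>W x. openin X W \<and> x \<in> W \<longrightarrow> (\<exists>U\<in>B. x \<in> U \<and> U \<subseteq> W)))"

end

theory Submission
  imports Defs
begin

lemma part1:
  assumes "A \<subseteq> topspace X" "x \<in> X interior_of A" "c_set X (X frontier_of A)"
  shows "\<exists>C. closedin X C \<and> openin X C \<and> x \<in> C \<and> C \<inter> X frontier_of A = {} \<and>
                 C \<inter> X interior_of A = C \<inter> X closure_of A \<and>
                 closedin X (C \<inter> X interior_of A) \<and> openin X (C \<inter> X interior_of A)"
proof -
  obtain F where F: "\<forall>C\<in>F. closedin X C \<and> openin X C" "X frontier_of A = topspace X \<inter> \<Inter>F"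
    using assms(3) unfolding c_set_def by blast
  have xt: "x \<in> topspace X" using assms(2) interior_of_subset_topspace[of X A] by blast
  have "x \<notin> X frontier_of A" using assms(2) by (simp add: frontier_of_def)
  then obtain C0 where C0: "C0 \<in> F" "x \<notin> C0" using F(2) xt by blast
  define C where "C = topspace X - C0"
  have cl: "closedin X C" "openin X C" using F(1) C0 unfolding C_def by auto
  have xc: "x \<in> C" using xt C0 C_def by auto
  have disj: "C \<inter> X frontier_of A = {}" using F(2) C0 C_def by auto
  have eq: "C \<inter> X interior_of A = C \<inter> X closure_of A"
    using disj interior_of_union_frontier_of[of X A] by blast
  have "closedin X (C \<inter> X closure_of A)" using cl by (simp add: closedin_Int)
  moreover have "openin X (C \<inter> X interior_of A)" using cl by (simp add: openin_Int)
  ultimately show ?thesis using cl xc disj eq by metis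
qed

theorem mainTheorem5:
  fixes X :: "'a topology"
  assumes "metrizable_space X" and "separable_space X"
  shows "(\<forall>A x. A \<subseteq> topspace X \<and> x \<in> X interior_of A \<and> c_set X (X frontier_of A) \<longrightarrow>
            (\<exists>C. closedin X C \<and> openin X C \<and> x \<in> C \<and> C \<inter> X frontier_of A = {} \<and>
                 C \<inter> X interior_of A = C \<inter> X closure_of A \<and>
                 closedin X (C \<inter> X interior_of A) \<and> openin X (C \<inter> X interior_of A)))
         \<and> (rim_C X \<longleftrightarrow> X dim_le 0)"
proof (intro conjI allI impI)
  show "\<exists>C. closedin X C \<and> openin X C \<and> x \<in> C \<and> C \<inter> X frontier_of A = {} \<and>
                 C \<inter> X interior_of A = C \<inter> X closure_of A \<and>
                 closedin X (C \<inter> X interior_of A) \<and> openin X (C \<inter> X interior_of A)"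
    if "A \<subseteq> topspace X \<and> x \<in> X interior_of A \<and> c_set X (X frontier_of A)" for A x
    using part1[of A X x] that by simp
  show "rim_C X \<longleftrightarrow> X dim_le 0"
  proof
    assume "rim_C X"
    then obtain B where B: "\<forall>U\<in>B. openin X U \<and> c_set X (X frontier_of U)"
      "\<forall>W x. openin X W \<and> x \<in> W \<longrightarrow> (\<exists>U\<in>B. x \<in> U \<and> U \<subseteq> W)"
      unfolding rim_C_def by blast
    have "neighbourhood_base_of (\<lambda>U. closedin X U \<and> openin X U) X"
      unfolding neighbourhood_base_of
    proof (intro allI impI)
      fix W x assume W: "openin X W \<and> x \<in> W"
      then obtain U where U: "U \<in> B" "x \<in> U" "U \<subseteq> W" using B(2) by blast
      have oU: "openin X U" using B(1) U by blast
      then have "X interior_of U = U" by (simp add: interior_of_openin)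
      have pre: "U \<subseteq> topspace X" "x \<in> X interior_of U" "c_set X (X frontier_of U)"
        using B(1) U oU openin_subset[OF oU] \<open>X interior_of U = U\<close> by auto
      obtain C where C: "closedin X C" "openin X C" "x \<in> C"
        "closedin X (C \<inter> X interior_of U)" "openin X (C \<inter> X interior_of U)"
        using part1[OF pre] by blast
      show "\<exists>U' V. openin X U' \<and> (closedin X V \<and> openin X V) \<and> x \<in> U' \<and> U' \<subseteq> V \<and> V \<subseteq> W"
      proof (intro exI conjI)
        show "openin X (C \<inter> U)" "closedin X (C \<inter> U)" using C \<open>X interior_of U = U\<close> by simp_all
        show "openin X (C \<inter> U)" using C \<open>X interior_of U = U\<close> by simp
        show "x \<in> C \<inter> U" using C U by simp
        show "C \<inter> U \<subseteq> C \<inter> U" by simp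
        show "C \<inter> U \<subseteq> W" using U by blast
      qed
    qed
    then show "X dim_le 0" by (simp add: dimension_le_0_neighbourhood_base_of_clopen)
  next
    assume "X dim_le 0"
    then have nb: "neighbourhood_base_of (\<lambda>U. closedin X U \<and> openin X U) X"
      by (simp add: dimension_le_0_neighbourhood_base_of_clopen)
    have ce: "c_set X {}" unfolding c_set_def by (rule exI[of _ "{{}}"]) simp
    have b1: "\<forall>U\<in>{U. closedin X U \<and> openin X U}. openin X U \<and> c_set X (X frontier_of U)"
    proof
      fix U assume "U \<in> {U. closedin X U \<and> openin X U}"
      then have cU: "closedin X U \<and> openin X U" by simp
      then have "X frontier_of U = {}" using clopenin_eq_frontier_of[of X U] by simp
      then show "openin X U \<and> c_set X (X frontier_of U)" using cU ce by simp
    qed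
    have b2: "\<forall>W x. openin X W \<and> x \<in> W \<longrightarrow> (\<exists>U\<in>{U. closedin X U \<and> openin X U}. x \<in> U \<and> U \<subseteq> W)"
    proof (intro allI impI)
      fix W x assume "openin X W \<and> x \<in> W"
      moreover have nb2: "\<forall>W x. openin X W \<and> x \<in> W
          \<longrightarrow> (\<exists>U V. openin X U \<and> (closedin X V \<and> openin X V) \<and> x \<in> U \<and> U \<subseteq> V \<and> V \<subseteq> W)"
        using nb by (simp only: neighbourhood_base_of)
      ultimately have "\<exists>U V. openin X U \<and> (closedin X V \<and> openin X V) \<and> x \<in> U \<and> U \<subseteq> V \<and> V \<subseteq> W"
        by (elim allE[of _ W] allE[of _ x] impE) simp_all
      then obtain U V where "openin X U" "closedin X V \<and> openin X V" "x \<in> U" "U \<subseteq> V" "V \<subseteq> W"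
        by (elim exE conjE) simp
      then show "\<exists>U\<in>{U. closedin X U \<and> openin X U}. x \<in> U \<and> U \<subseteq> W"
        by (intro bexI[of _ V] conjI) auto
    qed
    show "rim_C X" unfolding rim_C_def by (rule exI[of _ "{U. closedin X U \<and> openin X U}"]) (rule conjI[OF b1 b2])
  qed
qed

end
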